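(* Let $f:\mathbb{R}^n\to\mathbb{R}$ be twice continuously differentiable, $B\in\mathbb{R}^{p\times n}$, $\lambda_1,\lambda_2>0$, $l\le 0\le u$ in $\mathbb{R}^n$, $\Omega=\{x: l\le x\le u\}$, $g(x)=\lambda_1\|Bx\|_0+\lambda_2\|x\|_0+\delta_\Omega(x)$ and $F=f+g$. Then $g$ is prox-regular at every point of its domain $\Omega$. Consequently, the set of stationary points of the problem $\min_{x\in\mathbb{R}^n}F(x)$ (points $x$ with $0\in\partial F(x)$) coincides with its set of $L$-stationary points.
   Context: $\|y\|_0$ is the number of nonzero entries of $y$; $\delta_\Omega$ is the indicator of $\Omega$; $\partial$ denotes the basic (limiting) subdifferential. A function $h:\mathbb{R}^n\to(-\infty,+\infty]$ is prox-regular at $\bar x\in\mathrm{dom}\,h$ for $\bar v\in\partial h(\bar x)$ if $h$ is locally lower semicontinuous at $\bar x$ and there exist $r\ge0,\varepsilon>0$ such that $h(x')\ge h(x)+v^\top(x'-x)-\frac r2\|x'-x\|^2$ for all $\|x'-\bar x\|\le\varepsilon$ whenever $v\in\partial h(x)$, $\|v-\bar v\|<\varepsilon$, $\|x-\bar x\|<\varepsilon$ and $h(x)<h(\bar x)+\varepsilon$; $h$ is prox-regular at $\bar x$ if this holds for all $\bar v\in\partial h(\bar x)$. For $\mu>0$, $\mathrm{prox}_{\mu g}(z)=\arg\min_{x}\{\frac{1}{2\mu}\|x-z\|^2+g(x)\}$. A point $x$ is an $L$-stationary point of $\min F$ if there is $\mu>0$ with $x\in\mathrm{prox}_{\mu^{-1}g}(x-\mu^{-1}\nabla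 f(x))$. *)

theory Defs
  imports "HOL-Analysis.Analysis"
begin

text \<open>Extended-real-valued functions on a Euclidean space are modelled as maps into ereal;
  the value \<infinity> encodes points outside the effective domain.\<close>

definition l0 :: "real ^ 'k \<Rightarrow> real" where
  "l0 x = real (card {i. x $ i \<noteq> 0})"

text \<open>Regular (Frechet) subdifferential, unfolding the liminf definition.\<close>
definition frechet_subdiff :: "('a::euclidean_space \<Rightarrow> ereal) \<Rightarrow> 'a \<Rightarrow> 'a set" where
  "frechet_subdiff h x = {v. \<bar>h x\<bar> \<noteq> \<infinity> \<and>
     (\<forall>e>0. \<exists>d>0. \<forall>x'. norm (x' - x) < d \<longrightarrow>
        h x' \<ge> h x + ereal (inner v (x' - x) - e * norm (x' - x)))}"

definition limiting_subdiff :: "('a::euclidean_space \<Rightarrow> ereal) \<Rightarrow> 'a \<Rightarrow> 'a set" where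
  "limiting_subdiff h x = {v. \<bar>h x\<bar> \<noteq> \<infinity> \<and>
     (\<exists>xs vs. xs \<longlonglongrightarrow> x \<and> (\<lambda>k. h (xs k)) \<longlonglongrightarrow> h x \<and>
        (\<forall>k. vs k \<in> frechet_subdiff h (xs k)) \<and> vs \<longlonglongrightarrow> v)}"

definition locally_lsc_at :: "('a::euclidean_space \<Rightarrow> ereal) \<Rightarrow> 'a \<Rightarrow> bool" where
  "locally_lsc_at h xb \<longleftrightarrow> \<bar>h xb\<bar> \<noteq> \<infinity> \<and>
     (\<exists>e>0. \<forall>\<alpha>::real. ereal \<alpha> \<le> h xb + ereal e \<longrightarrow>
        closed {x. dist x xb \<le> e \<and> h x \<le> ereal \<alpha>})"

definition prox_regular_at_for :: "('a::euclidean_space \<Rightarrow> ereal) \<Rightarrow> 'a \<Rightarrow> 'a \<Rightarrow> bool" where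
  "prox_regular_at_for h xb vb \<longleftrightarrow> locally_lsc_at h xb \<and>
     (\<exists>r\<ge>0. \<exists>e>0. \<forall>x x' v.
        v \<in> limiting_subdiff h x \<and> norm (v - vb) < e \<and> norm (x - xb) < e \<and>
        h x < h xb + ereal e \<and> norm (x' - xb) \<le> e \<longrightarrow>
        h x' \<ge> h x + ereal (inner v (x' - x) - r / 2 * (norm (x' - x))\<^sup>2))"

definition prox_regular_at :: "('a::euclidean_space \<Rightarrow> ereal) \<Rightarrow> 'a \<Rightarrow> bool" where
  "prox_regular_at h xb \<longleftrightarrow> \<bar>h xb\<bar> \<noteq> \<infinity> \<and>
     (\<forall>vb \<in> limiting_subdiff h xb. prox_regular_at_for h xb vb)"

definition prox :: "real \<Rightarrow> ('a::euclidean_space \<Rightarrow> ereal) \<Rightarrow> 'a \<Rightarrow> 'a set" where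
  "prox \<mu> g z = {x. \<forall>y. ereal (1 / (2 * \<mu>) * (norm (x - z))\<^sup>2) + g x
                      \<le> ereal (1 / (2 * \<mu>) * (norm (y - z))\<^sup>2) + g y}"

definition L_stationary :: "('a::euclidean_space \<Rightarrow> 'a) \<Rightarrow> ('a \<Rightarrow> ereal) \<Rightarrow> 'a \<Rightarrow> bool" where
  "L_stationary gradf g x \<longleftrightarrow> (\<exists>\<mu>>0. x \<in> prox (inverse \<mu>) g (x - inverse \<mu> *\<^sub>R gradf x))"

end

theory Submission
  imports Defs
begin

definition supp :: "real ^ 'k \<Rightarrow> 'k set" where "supp x = {i. x $ i \<noteq> 0}"

lemma l0_supp: "l0 x = real (card (supp x))" by (simp add: l0_def supp_def)

lemma supp_nbhd:
  fixes B :: "real ^ 'n ^ 'p" and x :: "real ^ 'n"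
  shows "\<exists>\<rho>>0. \<forall>y. dist y x < \<rho> \<longrightarrow> supp x \<subseteq> supp y \<and> supp (B *v x) \<subseteq> supp (B *v y)"
proof -
  let ?U = "(\<Inter>i\<in>supp x. {y::real^'n. y $ i \<noteq> 0}) \<inter> (\<Inter>j\<in>supp (B *v x). {y. (B *v y) $ j \<noteq> 0})"
  have o1: "open {y::real^'n. y $ i \<noteq> 0}" for i
    by (intro open_Collect_neq continuous_on_component continuous_on_id matrix_vector_mult_linear_continuous_on continuous_on_const)
  have o2: "open {y::real^'n. (B *v y) $ j \<noteq> 0}" for j
    by (intro open_Collect_neq continuous_on_component continuous_on_id matrix_vector_mult_linear_continuous_on continuous_on_const)
  have "open ?U"
    using o1 o2 by (intro open_Int open_INT ballI) auto
  moreover have "x \<in> ?U" by (auto simp: supp_def)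
  ultimately obtain \<rho> where "\<rho> > 0" "ball x \<rho> \<subseteq> ?U"
    using open_contains_ball[THEN iffD1, rule_format] by metis
  show ?thesis
  proof (intro exI[of _ \<rho>] conjI allI impI)
    fix y assume "dist y x < \<rho>"
    then have "y \<in> ?U" using \<open>ball x \<rho> \<subseteq> ?U\<close> by (auto simp: dist_commute)
    then show "supp x \<subseteq> supp y" "supp (B *v x) \<subseteq> supp (B *v y)"
      unfolding supp_def by blast+
  qed (fact)
qed


definition gv :: "real^'n^'p \<Rightarrow> real \<Rightarrow> real \<Rightarrow> real^'n \<Rightarrow> real" where
  "gv B a b x = a * l0 (B *v x) + b * l0 x"

context
  fixes B :: "real^'n^'p" and lam1 lam2 :: real and \<Omega> :: "(real^'n) set"
    and g :: "real^'n \<Rightarrow> ereal" and l u :: "real^'n"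
  assumes hl1: "lam1 > 0" and hl2: "lam2 > 0"
    and Omega: "\<Omega> = {x. \<forall>i. l $ i \<le> x $ i \<and> x $ i \<le> u $ i}"
    and g_def: "\<And>x. g x = (if x \<in> \<Omega> then ereal (lam1 * l0 (B *v x) + lam2 * l0 x) else \<infinity>)"
begin

lemma g_in: "x \<in> \<Omega> \<Longrightarrow> g x = ereal (gv B lam1 lam2 x)"
  by (simp add: g_def gv_def)

lemma g_out: "x \<notin> \<Omega> \<Longrightarrow> g x = \<infinity>"
  by (simp add: g_def)

lemma gv_nonneg: "gv B lam1 lam2 x \<ge> 0"
  using hl1 hl2 by (simp add: gv_def l0_def)

lemma gv_mono:
  assumes "supp y \<subseteq> supp x" "supp (B *v y) \<subseteq> supp (B *v x)"
  shows "gv B lam1 lam2 y \<le> gv B lam1 lam2 x"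
proof -
  have "card (supp y) \<le> card (supp x)" "card (supp (B *v y)) \<le> card (supp (B *v x))"
    using assms by (auto intro: card_mono)
  then show ?thesis using hl1 hl2 unfolding gv_def l0_supp
    by (intro add_mono mult_left_mono) auto
qed

lemma gv_eq:
  assumes "supp y = supp x" "supp (B *v y) = supp (B *v x)"
  shows "gv B lam1 lam2 y = gv B lam1 lam2 x"
  using assms by (simp add: gv_def l0_supp)

lemma gv_gap:
  assumes "supp x \<subseteq> supp y" "supp (B *v x) \<subseteq> supp (B *v y)"
    and "\<not> (supp y = supp x \<and> supp (B *v y) = supp (B *v x))"
  shows "gv B lam1 lam2 x + min lam1 lam2 \<le> gv B lam1 lam2 y"
proof -
  have c1: "card (supp x) \<le> card (supp y)" "card (supp (B *v x)) \<le> card (supp (B *v y))"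
    using assms by (auto intro: card_mono)
  show ?thesis
  proof (cases "supp y = supp x")
    case True
    then have "supp (B *v x) \<subset> supp (B *v y)" using assms by auto
    then have "card (supp (B *v x)) < card (supp (B *v y))" by (intro psubset_card_mono) auto
    then have "real (card (supp (B *v x))) + 1 \<le> real (card (supp (B *v y)))" by linarith
    then have "lam1 * (real (card (supp (B *v x))) + 1) \<le> lam1 * real (card (supp (B *v y)))"
      using hl1 by (intro mult_left_mono) auto
    then show ?thesis using True unfolding gv_def l0_supp by (auto simp: algebra_simps)
  next
    case False
    then have "supp x \<subset> supp y" using assms by auto
    then have "card (supp x) < card (supp y)" by (intro psubset_card_mono) auto
    then have "real (card (supp x)) + 1 \<le> real (card (supp y))" by linarith
    then have "lam2 * (real (card (supp x)) + 1) \<le> lam2 * real (card (supp y))"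
      using hl2 by (intro mult_left_mono) auto
    moreover have "lam1 * real (card (supp (B *v x))) \<le> lam1 * real (card (supp (B *v y)))"
      using hl1 c1 by (intro mult_left_mono) auto
    ultimately show ?thesis unfolding gv_def l0_supp by (auto simp: algebra_simps)
  qed
qed

lemma seg_Omega:
  assumes "x \<in> \<Omega>" "y \<in> \<Omega>" "0 \<le> t" "t \<le> 1"
  shows "x + t *\<^sub>R (y - x) \<in> \<Omega>"
proof -
  have "l $ i \<le> x $ i + t * (y $ i - x $ i) \<and> x $ i + t * (y $ i - x $ i) \<le> u $ i" for i
  proof -
    have a: "l $ i \<le> x $ i" "x $ i \<le> u $ i" "l $ i \<le> y $ i" "y $ i \<le> u $ i"
      using assms(1,2) by (auto simp: Omega)
    have "x $ i + t * (y $ i - x $ i) = (1 - t) * x $ i + t * y $ i" by (simp add: algebra_simps)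
    moreover have "(1 - t) * l $ i \<le> (1 - t) * x $ i" "t * l $ i \<le> t * y $ i"
      "(1 - t) * x $ i \<le> (1 - t) * u $ i" "t * y $ i \<le> t * u $ i"
      using a assms(3,4) by (auto intro: mult_left_mono)
    ultimately show ?thesis by (auto simp: algebra_simps)
  qed
  then show ?thesis by (simp add: Omega)
qed

lemma seg_supp:
  assumes "supp y \<subseteq> supp x" "supp (B *v y) \<subseteq> supp (B *v x)"
  shows "supp (x + t *\<^sub>R (y - x)) \<subseteq> supp x" "supp (B *v (x + t *\<^sub>R (y - x))) \<subseteq> supp (B *v x)"
proof -
  show "supp (x + t *\<^sub>R (y - x)) \<subseteq> supp x"
    using assms(1) by (auto simp: supp_def)
  have "B *v (x + t *\<^sub>R (y - x)) = B *v x + t *\<^sub>R (B *v y - B *v x)"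
    by (simp add: algebra_simps)
  then show "supp (B *v (x + t *\<^sub>R (y - x))) \<subseteq> supp (B *v x)"
    using assms(2) by (auto simp: supp_def)
qed

lemma frechet_key:
  fixes h :: "real^'n \<Rightarrow> real"
  assumes hd: "(h has_derivative (\<lambda>d. inner G d)) (at x)"
    and w: "w \<in> frechet_subdiff (\<lambda>x. ereal (h x) + g x) x"
  shows "x \<in> \<Omega>"
    and "y \<in> \<Omega> \<Longrightarrow> supp y \<subseteq> supp x \<Longrightarrow> supp (B *v y) \<subseteq> supp (B *v x)
         \<Longrightarrow> inner (w - G) (y - x) \<le> 0"
proof -
  have fin: "\<bar>ereal (h x) + g x\<bar> \<noteq> \<infinity>"
    and fr: "\<And>e. e > 0 \<Longrightarrow> \<exists>d>0. \<forall>x'. norm (x' - x) < d \<longrightarrow>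
        ereal (h x') + g x' \<ge> ereal (h x) + g x + ereal (inner w (x' - x) - e * norm (x' - x))"
    using w unfolding frechet_subdiff_def by auto
  show xO: "x \<in> \<Omega>"
    using fin g_out by force
  assume yO: "y \<in> \<Omega>" and s1: "supp y \<subseteq> supp x" and s2: "supp (B *v y) \<subseteq> supp (B *v x)"
  show "inner (w - G) (y - x) \<le> 0"
  proof (rule ccontr)
    assume "\<not> ?thesis"
    then have c: "inner (w - G) (y - x) > 0" by simp
    define c where "c = inner (w - G) (y - x)"
    define d where "d = y - x"
    have cpos: "c > 0" using c by (simp add: c_def)
    have dnz: "norm d > 0" using c by (auto simp: d_def)
    define e where "e = c / (3 * norm d)"
    have epos: "e > 0" using cpos dnz by (simp add: e_def)
    obtain d1 where d1: "d1 > 0" "\<And>x'. norm (x' - x) < d1 \<Longrightarrow>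
        ereal (h x') + g x' \<ge> ereal (h x) + g x + ereal (inner w (x' - x) - e * norm (x' - x))"
      using fr[OF epos] by blast
    obtain d2 where d2: "d2 > 0" "\<And>y. norm (y - x) < d2 \<Longrightarrow>
        norm (h y - h x - inner G (y - x)) \<le> e * norm (y - x)"
      using hd[unfolded has_derivative_at_alt] epos by blast
    define t where "t = min 1 (min d1 d2 / (2 * norm d))"
    have tpos: "t > 0" using d1 d2 dnz by (simp add: t_def)
    have tle: "t \<le> 1" by (simp add: t_def)
    have "t * norm d \<le> min d1 d2 / 2"
    proof -
      have "t \<le> min d1 d2 / (2 * norm d)" by (simp add: t_def)
      then have "t * norm d \<le> min d1 d2 / (2 * norm d) * norm d"
        using dnz by (intro mult_right_mono) auto
      also have "\<dots> = min d1 d2 / 2" using dnz by (simp add: field_simps)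
      finally show ?thesis .
    qed
    then have tn1: "t * norm d < d1" and tn2: "t * norm d < d2" using d1 d2 by linarith+
    define z where "z = x + t *\<^sub>R (y - x)"
    have zx: "z - x = t *\<^sub>R d" by (simp add: z_def d_def)
    have nz: "norm (z - x) = t * norm d" using tpos by (simp add: zx)
    have zO: "z \<in> \<Omega>" unfolding z_def using seg_Omega[OF xO yO] tpos tle by auto
    have gz: "gv B lam1 lam2 z \<le> gv B lam1 lam2 x"
      unfolding z_def using seg_supp[OF s1 s2] by (intro gv_mono) auto
    have A: "h z + gv B lam1 lam2 z \<ge> h x + gv B lam1 lam2 x + (t * inner w d - e * (t * norm d))"
      using d1(2)[of z] tn1 nz zx g_in[OF zO] g_in[OF xO] tpos by (simp add: inner_scaleR_right)
    have Bd: "h z - h x - t * inner G d \<le> e * (t * norm d)"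
      using d2(2)[of z] tn2 nz zx tpos by (simp add: inner_scaleR_right)
    have "t * c \<le> 2 * e * (t * norm d)"
      using A Bd gz by (simp add: c_def d_def inner_diff_left algebra_simps)
    also have "\<dots> = 2/3 * (t * c)" using dnz by (simp add: e_def field_simps)
    finally have "t * c \<le> 2/3 * (t * c)" .
    moreover have "t * c > 0" using tpos cpos by simp
    ultimately show False by linarith
  qed
qed

lemma limiting_key:
  fixes h :: "real^'n \<Rightarrow> real"
  assumes hd: "\<And>x. (h has_derivative (\<lambda>d. inner (gh x) d)) (at x)"
    and gc: "\<And>x. isCont gh x"
    and w: "w \<in> limiting_subdiff (\<lambda>x. ereal (h x) + g x) x"
  shows "x \<in> \<Omega>"
    and "y \<in> \<Omega> \<Longrightarrow> supp y \<subseteq> supp x \<Longrightarrow> supp (B *v y) \<subseteq> supp (B *v x)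
         \<Longrightarrow> inner (w - gh x) (y - x) \<le> 0"
proof -
  have fin: "\<bar>ereal (h x) + g x\<bar> \<noteq> \<infinity>"
    using w unfolding limiting_subdiff_def by auto
  show xO: "x \<in> \<Omega>"
    using fin g_out by force
  obtain xs vs where xs: "xs \<longlonglongrightarrow> x" and vsF: "\<And>k. vs k \<in> frechet_subdiff (\<lambda>x. ereal (h x) + g x) (xs k)"
    and vs: "vs \<longlonglongrightarrow> w"
    using w unfolding limiting_subdiff_def by blast
  obtain \<rho> where \<rho>: "\<rho> > 0" "\<And>y. dist y x < \<rho> \<Longrightarrow> supp x \<subseteq> supp y \<and> supp (B *v x) \<subseteq> supp (B *v y)"
    using supp_nbhd[of x B] by blast
  assume yO: "y \<in> \<Omega>" and s1: "supp y \<subseteq> supp x" and s2: "supp (B *v y) \<subseteq> supp (B *v x)"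
  have ev: "eventually (\<lambda>k. dist (xs k) x < \<rho>) sequentially"
    using xs \<rho>(1) by (rule tendstoD)
  have ev2: "eventually (\<lambda>k. inner (vs k - gh (xs k)) (y - xs k) \<le> 0) sequentially"
    using ev
  proof (rule eventually_mono)
    fix k assume "dist (xs k) x < \<rho>"
    then have "supp x \<subseteq> supp (xs k)" "supp (B *v x) \<subseteq> supp (B *v (xs k))" using \<rho>(2) by auto
    then show "inner (vs k - gh (xs k)) (y - xs k) \<le> 0"
      using frechet_key(2)[OF hd vsF yO] s1 s2 by blast
  qed
  have lim: "(\<lambda>k. inner (vs k - gh (xs k)) (y - xs k)) \<longlonglongrightarrow> inner (w - gh x) (y - x)"
    by (intro tendsto_intros vs xs isCont_tendsto_compose[OF gc])
  show "inner (w - gh x) (y - x) \<le> 0"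
    using tendsto_le[OF trivial_limit_sequentially tendsto_const lim ev2] .
qed

end


lemma prox_expand:
  fixes x y G :: "real^'n" and \<mu> :: real
  assumes "\<mu> > 0"
  shows "1 / (2 * inverse \<mu>) * (norm (y - (x - inverse \<mu> *\<^sub>R G)))\<^sup>2
       = \<mu> / 2 * (norm (y - x))\<^sup>2 + inner G (y - x) + 1 / (2 * inverse \<mu>) * (norm (x - (x - inverse \<mu> *\<^sub>R G)))\<^sup>2"
proof -
  define c where "c = inverse \<mu>"
  define d where "d = y - x"
  have e: "y - (x - c *\<^sub>R G) = d + c *\<^sub>R G" by (simp add: d_def)
  have e2: "x - (x - c *\<^sub>R G) = c *\<^sub>R G" by simp
  have n1: "(norm (d + c *\<^sub>R G))\<^sup>2 = (norm d)\<^sup>2 + 2 * c * inner G d + c\<^sup>2 * (norm G)\<^sup>2"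
    unfolding power2_norm_eq_inner
    by (simp add: inner_add_left inner_add_right inner_commute power2_eq_square algebra_simps)
  have n2: "(norm (c *\<^sub>R G))\<^sup>2 = c\<^sup>2 * (norm G)\<^sup>2"
    by (simp add: power_mult_distrib)
  have "1 / (2 * c) = \<mu> / 2" using assms by (simp add: c_def field_simps)
  moreover have "\<mu> * c = 1" using assms by (simp add: c_def)
  ultimately show ?thesis unfolding c_def[symmetric] d_def[symmetric] e e2 n1 n2
  proof -
    assume h1: "1 / (2 * c) = \<mu> / 2" and h2: "\<mu> * c = 1"
    have "\<mu> / 2 * ((norm d)\<^sup>2 + 2 * c * inner G d + c\<^sup>2 * (norm G)\<^sup>2)
        = \<mu> / 2 * (norm d)\<^sup>2 + (\<mu> * c) * inner G d + \<mu> / 2 * (c\<^sup>2 * (norm G)\<^sup>2)"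
      by (simp add: algebra_simps)
    then show "1 / (2 * c) * ((norm d)\<^sup>2 + 2 * c * inner G d + c\<^sup>2 * (norm G)\<^sup>2)
        = \<mu> / 2 * (norm d)\<^sup>2 + inner G d + 1 / (2 * c) * (c\<^sup>2 * (norm G)\<^sup>2)"
      unfolding h1 h2 by simp
  qed
qed

lemma sep_bound:
  fixes s r a b \<mu> :: real
  assumes "r > 0" "s \<ge> r" "a \<ge> 0" "b \<ge> 0" "\<mu> = 2 * (a + b / r + 1) / r"
  shows "b \<le> \<mu> / 2 * s\<^sup>2 - a * s"
proof -
  have "\<mu> * r / 2 = a + b / r + 1" using assms by (simp add: field_simps)
  moreover have "\<mu> \<ge> 0" using assms by simp
  ultimately have "\<mu> * s / 2 \<ge> a + b / r + 1" using assms(2)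
    by (smt (verit) mult_left_mono divide_right_mono)
  then have "s * (\<mu> * s / 2) \<ge> s * (a + b / r + 1)" using assms by (intro mult_left_mono) auto
  moreover have "s * (b / r) \<ge> r * (b / r)" using assms by (intro mult_right_mono) auto
  moreover have "r * (b / r) = b" using assms by simp
  ultimately show ?thesis using assms by (simp add: power2_eq_square algebra_simps)
qed


theorem lemma3p1:
  fixes f :: "real ^ 'n \<Rightarrow> real"
    and gradf :: "real ^ 'n \<Rightarrow> real ^ 'n"
    and hessf :: "real ^ 'n \<Rightarrow> ((real ^ 'n) \<Rightarrow>\<^sub>L (real ^ 'n))"
    and B :: "real ^ 'n ^ 'p"
    and lam1 lam2 :: real
    and l u :: "real ^ 'n"
    and \<Omega> :: "(real ^ 'n) set"
    and g F :: "real ^ 'n \<Rightarrow> ereal"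
  assumes grad: "\<And>x. (f has_derivative (\<lambda>h. inner (gradf x) h)) (at x)"
    and hess: "\<And>x. (gradf has_derivative blinfun_apply (hessf x)) (at x)"
    and hess_cont: "continuous_on UNIV hessf"
    and hl1: "lam1 > 0" and hl2: "lam2 > 0"
    and lu: "\<And>i. l $ i \<le> 0 \<and> 0 \<le> u $ i"
    and Omega: "\<Omega> = {x. \<forall>i. l $ i \<le> x $ i \<and> x $ i \<le> u $ i}"
    and g_def: "\<And>x. g x = (if x \<in> \<Omega> then ereal (lam1 * l0 (B *v x) + lam2 * l0 x) else \<infinity>)"
    and F_def: "\<And>x. F x = ereal (f x) + g x"
  shows "(\<forall>x\<in>\<Omega>. prox_regular_at g x) \<and>
         {x. 0 \<in> limiting_subdiff F x} = {x. L_stationary gradf g x}"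
proof -
  note gin = g_in[OF hl1 hl2 Omega g_def]
  note gout = g_out[OF hl1 hl2 Omega g_def]
  note gvnn = gv_nonneg[OF hl1 hl2 Omega g_def]
  note gvmono = gv_mono[OF hl1 hl2 Omega g_def]
  note gveq = gv_eq[OF hl1 hl2 Omega g_def]
  note gvgap = gv_gap[OF hl1 hl2 Omega g_def]
  let ?gv = "gv B lam1 lam2"
  define m where "m = min lam1 lam2"
  have mpos: "m > 0" using hl1 hl2 by (simp add: m_def)
  have F_eq: "F = (\<lambda>x. ereal (f x) + g x)" using F_def by auto
  have g_eq: "limiting_subdiff g = limiting_subdiff (\<lambda>x. ereal ((\<lambda>_. 0::real) x) + g x)"
    by (simp add: zero_ereal_def[symmetric])
  have hd0: "\<And>x. ((\<lambda>_. 0::real) has_derivative (\<lambda>d. inner ((\<lambda>_. 0::real^'n) x) d)) (at x)"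
    by simp
  have gc0: "\<And>x. isCont (\<lambda>_. 0::real^'n) x" by simp
  have gradc: "\<And>x. isCont gradf x" using hess by (rule has_derivative_continuous)
  note keyg = limiting_key[OF hl1 hl2 Omega g_def hd0 gc0]
  note keyf = limiting_key[OF hl1 hl2 Omega g_def grad gradc]

  have part1: "\<forall>xb\<in>\<Omega>. prox_regular_at g xb"
  proof
    fix xb assume xbO: "xb \<in> \<Omega>"
    obtain \<rho> where \<rho>: "\<rho> > 0" "\<And>y. dist y xb < \<rho> \<Longrightarrow> supp xb \<subseteq> supp y \<and> supp (B *v xb) \<subseteq> supp (B *v y)"
      using supp_nbhd[of xb B] by blast
    show "prox_regular_at g xb" unfolding prox_regular_at_def
    proof (intro conjI ballI)
      show "\<bar>g xb\<bar> \<noteq> \<infinity>" using gin[OF xbO] by simp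
      fix vb assume "vb \<in> limiting_subdiff g xb"
      define e where "e = min (\<rho>/2) (min 1 (m / (4 * (norm vb + 1))))"
      have "m / (4 * (norm vb + 1)) > 0" using mpos by (intro divide_pos_pos) (auto intro: add_nonneg_pos)
      then have epos: "e > 0" using \<rho> by (simp add: e_def)
      have erho: "e < \<rho>" using \<rho> by (simp add: e_def)
      have e1: "e \<le> 1" by (simp add: e_def)
      have em4: "e \<le> m / (4 * (norm vb + 1))" by (simp add: e_def)
      then have "e * (4 * (norm vb + 1)) \<le> m"
        by (smt (verit) norm_ge_zero pos_le_divide_eq)
      then have em2: "(norm vb + 1) * (2 * e) \<le> m / 2" by (simp add: algebra_simps)
      have em: "e < m"
      proof -
        have "m / (4 * (norm vb + 1)) \<le> m / 4"
          by (rule frac_le) (use mpos in auto)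
        then show ?thesis using em4 mpos by linarith
      qed
      have lsc_char: "g y \<le> ereal \<alpha> \<longleftrightarrow> y \<in> \<Omega> \<and> supp y \<subseteq> supp xb \<and> supp (B *v y) \<subseteq> supp (B *v xb) \<and> ?gv xb \<le> \<alpha>"
        if dy: "dist y xb \<le> e" and al: "ereal \<alpha> \<le> g xb + ereal e" for y \<alpha>
      proof -
        have al': "\<alpha> \<le> ?gv xb + e" using al gin[OF xbO] by simp
        have sup: "supp xb \<subseteq> supp y" "supp (B *v xb) \<subseteq> supp (B *v y)" using \<rho>(2)[of y] dy erho by auto
        show ?thesis
        proof
          assume ga: "g y \<le> ereal \<alpha>"
          have yO: "y \<in> \<Omega>" using ga gout by force
          have gya: "?gv y \<le> \<alpha>" using ga gin[OF yO] by simp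
          have eq: "supp y = supp xb \<and> supp (B *v y) = supp (B *v xb)"
          proof (rule ccontr)
            assume "\<not> ?thesis"
            then have "?gv xb + m \<le> ?gv y" using gvgap[OF sup] by (simp add: m_def)
            then show False using gya al' em by linarith
          qed
          then show "y \<in> \<Omega> \<and> supp y \<subseteq> supp xb \<and> supp (B *v y) \<subseteq> supp (B *v xb) \<and> ?gv xb \<le> \<alpha>"
            using yO gya gveq[of y xb] by auto
        next
          assume h: "y \<in> \<Omega> \<and> supp y \<subseteq> supp xb \<and> supp (B *v y) \<subseteq> supp (B *v xb) \<and> ?gv xb \<le> \<alpha>"
          then have "?gv y = ?gv xb" using sup by (intro gveq) auto
          then show "g y \<le> ereal \<alpha>" using h gin by simp
        qed
      qed
      have clO: "closed \<Omega>"
      proof -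
        have "\<Omega> = (\<Inter>i. {x. l $ i \<le> x $ i} \<inter> {x. x $ i \<le> u $ i})" by (auto simp: Omega)
        moreover have "closed {x::real^'n. l $ i \<le> x $ i}" "closed {x::real^'n. x $ i \<le> u $ i}" for i
          by (intro closed_Collect_le continuous_on_component continuous_on_id continuous_on_const)+
        ultimately show ?thesis by (auto intro!: closed_INT)
      qed
      have clS: "closed {y. supp y \<subseteq> supp xb \<and> supp (B *v y) \<subseteq> supp (B *v xb)}"
      proof -
        have "{y. supp y \<subseteq> supp xb \<and> supp (B *v y) \<subseteq> supp (B *v xb)}
          = (\<Inter>i\<in>-supp xb. {y::real^'n. y $ i = 0}) \<inter> (\<Inter>j\<in>-supp (B *v xb). {y. (B *v y) $ j = 0})"
          by (auto simp: supp_def)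
        moreover have "closed {y::real^'n. y $ i = 0}" "closed {y::real^'n. (B *v y) $ j = 0}" for i j
          by (intro closed_Collect_eq continuous_on_component continuous_on_id matrix_vector_mult_linear_continuous_on continuous_on_const)+
        ultimately show ?thesis by (auto intro!: closed_INT closed_Int)
      qed
      show "prox_regular_at_for g xb vb"
        unfolding prox_regular_at_for_def locally_lsc_at_def
      proof (intro conjI)
        show "\<bar>g xb\<bar> \<noteq> \<infinity>" using gin[OF xbO] by simp
        show "\<exists>e>0. \<forall>\<alpha>. ereal \<alpha> \<le> g xb + ereal e \<longrightarrow> closed {x. dist x xb \<le> e \<and> g x \<le> ereal \<alpha>}"
        proof (intro exI[of _ e] conjI allI impI epos)
          fix \<alpha> assume al: "ereal \<alpha> \<le> g xb + ereal e"
          have eqs: "{x. dist x xb \<le> e \<and> g x \<le> ereal \<alpha>} = cball xb e \<inter> \<Omega> \<inter>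
              {y. supp y \<subseteq> supp xb \<and> supp (B *v y) \<subseteq> supp (B *v xb)} \<inter> {y. ?gv xb \<le> \<alpha>}"
            using lsc_char[OF _ al] by (auto simp: dist_commute mem_cball)
          have cl: "closed {y::real^'n. ?gv xb \<le> \<alpha>}" by (cases "?gv xb \<le> \<alpha>") auto
          show "closed {x. dist x xb \<le> e \<and> g x \<le> ereal \<alpha>}"
            unfolding eqs by (intro closed_Int closed_cball clO clS cl)
        qed
        show "\<exists>r\<ge>0. \<exists>e>0. \<forall>x x' v. v \<in> limiting_subdiff g x \<and> norm (v - vb) < e \<and> norm (x - xb) < e \<and>
            g x < g xb + ereal e \<and> norm (x' - xb) \<le> e \<longrightarrow>
            g x + ereal (inner v (x' - x) - r / 2 * (norm (x' - x))\<^sup>2) \<le> g x'"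
        proof (rule exI[of _ "0::real"], rule conjI[OF order_refl], rule exI[of _ e], intro conjI allI impI epos)
          fix x x' v
          assume H: "v \<in> limiting_subdiff g x \<and> norm (v - vb) < e \<and> norm (x - xb) < e \<and>
            g x < g xb + ereal e \<and> norm (x' - xb) \<le> e"
          have "v \<in> limiting_subdiff g x" using H by blast
          then have vL: "v \<in> limiting_subdiff (\<lambda>x. ereal ((\<lambda>_. 0::real) x) + g x) x" by (simp only: g_eq)
          have xO: "x \<in> \<Omega>" using keyg(1)[OF vL] .
          have kv: "\<And>y. y \<in> \<Omega> \<Longrightarrow> supp y \<subseteq> supp x \<Longrightarrow> supp (B *v y) \<subseteq> supp (B *v x) \<Longrightarrow> inner v (y - x) \<le> 0"
            using keyg(2)[OF vL] by simp
          have supx: "supp xb \<subseteq> supp x" "supp (B *v xb) \<subseteq> supp (B *v x)"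
            using \<rho>(2)[of x] H erho by (auto simp: dist_norm)
          have gxlt: "?gv x < ?gv xb + e" using H gin[OF xO] gin[OF xbO] by simp
          have eqx: "supp x = supp xb \<and> supp (B *v x) = supp (B *v xb)"
          proof (rule ccontr)
            assume "\<not> ?thesis"
            then have "?gv xb + m \<le> ?gv x" using gvgap[OF supx] by (simp add: m_def)
            then show False using gxlt em by linarith
          qed
          have gvx: "?gv x = ?gv xb" using eqx gveq by blast
          show "g x + ereal (inner v (x' - x) - 0 / 2 * (norm (x' - x))\<^sup>2) \<le> g x'"
          proof (cases "x' \<in> \<Omega>")
            case False
            then show ?thesis using gout gin[OF xO] by simp
          next
            case x'O: True
            have supx': "supp xb \<subseteq> supp x'" "supp (B *v xb) \<subseteq> supp (B *v x')"
              using \<rho>(2)[of x'] H erho by (auto simp: dist_norm)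
            show ?thesis
            proof (cases "supp x' = supp xb \<and> supp (B *v x') = supp (B *v xb)")
              case True
              then have "inner v (x' - x) \<le> 0" using kv[OF x'O] eqx by auto
              moreover have "?gv x' = ?gv x" using True eqx gveq by metis
              ultimately show ?thesis using gin[OF xO] gin[OF x'O] by simp
            next
              case False
              then have gap: "?gv xb + m \<le> ?gv x'" using gvgap[OF supx'] by (simp add: m_def)
              have nv: "norm v \<le> norm vb + 1"
                using H e1 norm_triangle_ineq2[of v vb] by linarith
              have nx: "norm (x' - x) \<le> 2 * e"
                using H norm_triangle_ineq[of "x' - xb" "xb - x"] norm_minus_commute[of x xb] by simp
              have "inner v (x' - x) \<le> norm v * norm (x' - x)" by (rule norm_cauchy_schwarz)
              also have "\<dots> \<le> (norm vb + 1) * (2 * e)" using nv nx by (intro mult_mono) auto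
              also have "\<dots> \<le> m / 2" by (rule em2)
              finally have "inner v (x' - x) \<le> m / 2" .
              then show ?thesis using gin[OF xO] gin[OF x'O] gap gvx mpos by simp
            qed
          qed
        qed
      qed
    qed
  qed
  have sub1: "L_stationary gradf g x" if x0: "0 \<in> limiting_subdiff F x" for x
  proof -
    have x0': "0 \<in> limiting_subdiff (\<lambda>x. ereal (f x) + g x) x" using x0 F_eq by simp
    have xO: "x \<in> \<Omega>" using keyf(1)[OF x0'] .
    define G where "G = gradf x"
    have kG: "\<And>y. y \<in> \<Omega> \<Longrightarrow> supp y \<subseteq> supp x \<Longrightarrow> supp (B *v y) \<subseteq> supp (B *v x) \<Longrightarrow> inner G (y - x) \<ge> 0"
      using keyf(2)[OF x0'] by (simp add: G_def inner_diff_left)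
    obtain \<rho> where \<rho>: "\<rho> > 0" "\<And>y. dist y x < \<rho> \<Longrightarrow> supp x \<subseteq> supp y \<and> supp (B *v x) \<subseteq> supp (B *v y)"
      using supp_nbhd[of x B] by blast
    define r where "r = min \<rho> (m / (norm G + 1))"
    have rpos: "r > 0" using \<rho> mpos by (simp add: r_def add_nonneg_pos)
    have rle: "r \<le> \<rho>" by (simp add: r_def)
    have rm: "norm G * r \<le> m"
    proof -
      have "norm G * r \<le> norm G * (m / (norm G + 1))" by (intro mult_left_mono) (auto simp: r_def)
      also have "\<dots> \<le> (norm G + 1) * (m / (norm G + 1))" using mpos by (intro mult_right_mono) auto
      also have "\<dots> = m" proof -
        have "norm G + 1 \<noteq> 0" using norm_ge_zero[of G] by linarith
        then show ?thesis by simp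
      qed
      finally show ?thesis .
    qed
    define \<mu> where "\<mu> = 2 * (norm G + ?gv x / r + 1) / r"
    have mupos: "\<mu> > 0" using rpos gvnn[of x] by (simp add: \<mu>_def add_nonneg_pos)
    have real_ineq: "?gv x \<le> \<mu> / 2 * (norm (y - x))\<^sup>2 + inner G (y - x) + ?gv y" if yO: "y \<in> \<Omega>" for y
    proof (cases "norm (y - x) < r")
      case True
      then have sup: "supp x \<subseteq> supp y" "supp (B *v x) \<subseteq> supp (B *v y)"
        using \<rho>(2)[of y] rle by (auto simp: dist_norm)
      have sq: "\<mu> / 2 * (norm (y - x))\<^sup>2 \<ge> 0" using mupos by simp
      show ?thesis
      proof (cases "supp y = supp x \<and> supp (B *v y) = supp (B *v x)")
        case True
        then have "inner G (y - x) \<ge> 0" using kG[OF yO] by auto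
        moreover have "?gv y = ?gv x" using True gveq by metis
        ultimately show ?thesis using sq by linarith
      next
        case False
        then have gap: "?gv x + m \<le> ?gv y" using gvgap[OF sup] by (simp add: m_def)
        have "- inner G (y - x) \<le> norm G * norm (y - x)"
          using norm_cauchy_schwarz[of "-G" "y - x"] by simp
        also have "\<dots> \<le> norm G * r" using True by (intro mult_left_mono) auto
        finally show ?thesis using rm gap sq by linarith
      qed
    next
      case False
      have "?gv x \<le> \<mu> / 2 * (norm (y - x))\<^sup>2 - norm G * norm (y - x)"
        by (rule sep_bound[OF rpos _ norm_ge_zero gvnn]) (use False \<mu>_def in auto)
      moreover have "- inner G (y - x) \<le> norm G * norm (y - x)"
        using norm_cauchy_schwarz[of "-G" "y - x"] by simp
      moreover have "?gv y \<ge> 0" by (rule gvnn)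
      ultimately show ?thesis by linarith
    qed
    show ?thesis unfolding L_stationary_def prox_def
    proof (intro exI[of _ \<mu>] conjI mupos CollectI allI)
      fix y
      show "ereal (1 / (2 * inverse \<mu>) * (norm (x - (x - inverse \<mu> *\<^sub>R gradf x)))\<^sup>2) + g x
         \<le> ereal (1 / (2 * inverse \<mu>) * (norm (y - (x - inverse \<mu> *\<^sub>R gradf x)))\<^sup>2) + g y"
      proof (cases "y \<in> \<Omega>")
        case False
        then show ?thesis using gout by simp
      next
        case True
        then show ?thesis using real_ineq[OF True] prox_expand[OF mupos, of y x G] gin[OF True] gin[OF xO]
          by (simp add: G_def)
      qed
    qed
  qed
  have sub2: "0 \<in> limiting_subdiff F x" if Ls: "L_stationary gradf g x" for x
  proof -
    obtain \<mu> where mupos: "\<mu> > 0" and pr: "\<And>y. ereal (1 / (2 * inverse \<mu>) * (norm (x - (x - inverse \<mu> *\<^sub>R gradf x)))\<^sup>2) + g x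
         \<le> ereal (1 / (2 * inverse \<mu>) * (norm (y - (x - inverse \<mu> *\<^sub>R gradf x)))\<^sup>2) + g y"
      using Ls unfolding L_stationary_def prox_def by blast
    define G where "G = gradf x"
    have zO: "0 \<in> \<Omega>" using lu by (simp add: Omega)
    have xO: "x \<in> \<Omega>"
    proof (rule ccontr)
      assume "x \<notin> \<Omega>"
      then show False using pr[of 0] gout gin[OF zO] by simp
    qed
    have real_ineq: "?gv x \<le> \<mu> / 2 * (norm (y - x))\<^sup>2 + inner G (y - x) + ?gv y" if yO: "y \<in> \<Omega>" for y
      using pr[of y] prox_expand[OF mupos, of y x G] gin[OF yO] gin[OF xO] by (simp add: G_def)
    have fr: "0 \<in> frechet_subdiff F x"
      unfolding frechet_subdiff_def
    proof (intro CollectI conjI allI impI)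
      show "\<bar>F x\<bar> \<noteq> \<infinity>" using F_def gin[OF xO] by simp
      fix e :: real assume epos: "e > 0"
      obtain d2 where d2: "d2 > 0" "\<And>y. norm (y - x) < d2 \<Longrightarrow>
          norm (f y - f x - inner G (y - x)) \<le> e / 2 * norm (y - x)"
        using grad[of x, unfolded has_derivative_at_alt] epos unfolding G_def
        by (metis half_gt_zero)
      show "\<exists>d>0. \<forall>x'. norm (x' - x) < d \<longrightarrow> F x + ereal (inner 0 (x' - x) - e * norm (x' - x)) \<le> F x'"
      proof (intro exI[of _ "min d2 (e / \<mu>)"] conjI allI impI)
        show "min d2 (e / \<mu>) > 0" using d2 epos mupos by simp
        fix x' assume nx: "norm (x' - x) < min d2 (e / \<mu>)"
        show "F x + ereal (inner 0 (x' - x) - e * norm (x' - x)) \<le> F x'"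
        proof (cases "x' \<in> \<Omega>")
          case False
          then show ?thesis using F_def gout by simp
        next
          case True
          define n where "n = norm (x' - x)"
          have n0: "n \<ge> 0" by (simp add: n_def)
          have fb: "f x' - f x - inner G (x' - x) \<ge> - (e / 2 * n)"
            using d2(2)[of x'] nx unfolding n_def by (smt (verit) real_norm_def abs_le_iff min_less_iff_conj)
          have "\<mu> * n \<le> e" using nx mupos unfolding n_def by (simp add: field_simps)
          then have "n * (\<mu> * n) \<le> n * e" using n0 by (intro mult_left_mono)
          then have sq: "\<mu> / 2 * n\<^sup>2 \<le> e / 2 * n" by (simp add: power2_eq_square algebra_simps)
          have "?gv x \<le> \<mu> / 2 * n\<^sup>2 + inner G (x' - x) + ?gv x'" using real_ineq[OF True] by (simp add: n_def)
          then have "f x + ?gv x - e * n \<le> f x' + ?gv x'" using fb sq by linarith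
          then show ?thesis using F_def gin[OF True] gin[OF xO] by (simp add: n_def)
        qed
      qed
    qed
    show ?thesis unfolding limiting_subdiff_def
    proof (rule CollectI, rule conjI)
      show "\<bar>F x\<bar> \<noteq> \<infinity>" using F_def gin[OF xO] by simp
      show "\<exists>xs vs. xs \<longlonglongrightarrow> x \<and> (\<lambda>k. F (xs k)) \<longlonglongrightarrow> F x \<and>
        (\<forall>k. vs k \<in> frechet_subdiff F (xs k)) \<and> vs \<longlonglongrightarrow> 0"
        by (rule exI[of _ "\<lambda>_. x"], rule exI[of _ "\<lambda>_. 0"]) (use fr in auto)
    qed
  qed
  show ?thesis using part1 sub1 sub2 by blast
qed

end
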